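(* Fix $n,p$, a bandwidth $k$, a positive integer $|J_A|$, and constants $M>0$, $\kappa>0$, $\nu>0$. Let $p'=(2k+1)\sqrt{(p-k-1)(p-k)}$ and, for positive integers $a$, $$\rho_a=(Mp'/|J_A|)^{1/a}(a!)^{1/(2a)}\kappa^{1/2}\nu n^{-1/2}.$$ Considering $\rho_a$ as a function of the integer order $a$: (i) if $|J_A|\ge Mp'$, the minimum of $\rho_a$ is achieved at $a=1$; (ii) if $|J_A|<Mp'$, the minimum of $\rho_a$ is achieved at some $a$, which increases as $Mp'/|J_A|$ increases.
   Context: In the paper, $\rho_a$ is the common signal strength $\sigma_{j_1j_2}=\rho$ (for $(j_1,j_2)$ in the signal set $J_A$ of size $|J_A|$ outside the band $|j_1-j_2|\le k$) at which the test based on the order-$a$ U-statistic attains asymptotic power $\Phi(-z_{1-\alpha}+M/\sqrt2)$, in the special case where the in-band covariances equal $\nu$ and the moment constant is $\kappa$; $n$ is the sample size and $p$ the dimension. *)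

theory Defs
  imports Complex_Main
begin

definition pprime :: "nat \<Rightarrow> nat \<Rightarrow> real" where
  "pprime k p = (2 * real k + 1) * sqrt ((real p - real k - 1) * (real p - real k))"

definition rho :: "nat \<Rightarrow> nat \<Rightarrow> nat \<Rightarrow> nat \<Rightarrow> real \<Rightarrow> real \<Rightarrow> real \<Rightarrow> nat \<Rightarrow> real" where
  "rho n p k JA M \<kappa> \<nu> a =
     (M * pprime k p / real JA) powr (1 / real a) * (fact a) powr (1 / (2 * real a))
     * \<kappa> powr (1/2) * \<nu> * real n powr (-1/2)"

definition is_min_order :: "nat \<Rightarrow> nat \<Rightarrow> nat \<Rightarrow> nat \<Rightarrow> real \<Rightarrow> real \<Rightarrow> real \<Rightarrow> nat \<Rightarrow> bool" where
  "is_min_order n p k JA M \<kappa> \<nu> a \<longleftrightarrow>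
     a \<ge> 1 \<and> (\<forall>b\<ge>1. rho n p k JA M \<kappa> \<nu> a \<le> rho n p k JA M \<kappa> \<nu> b)"

end

theory Submission
  imports Defs
begin

definition FF :: "real \<Rightarrow> nat \<Rightarrow> real" where
  "FF L a = L / real a + ln (fact a) / (2 * real a)"

definition PP :: "real \<Rightarrow> nat \<Rightarrow> bool" where
  "PP L a \<longleftrightarrow> a \<ge> 1 \<and> (\<forall>b\<ge>1. FF L a \<le> FF L b)"

lemma pprime_nonneg: "k < p \<Longrightarrow> pprime k p \<ge> 0"
  unfolding pprime_def by (intro mult_nonneg_nonneg) auto

lemma rho_eq:
  assumes "x = M * pprime k p / real JA" "x > 0" "a \<ge> 1"
  shows "rho n p k JA M \<kappa> \<nu> a = exp (FF (ln x) a) * (\<kappa> powr (1/2) * \<nu> * real n powr (-1/2))"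
proof -
  have "fact a > (0::real)" by simp
  then show ?thesis using assms unfolding rho_def assms(1)[symmetric]
    by (simp add: FF_def powr_def exp_add mult_ac)
qed

lemma min_iff:
  assumes "x = M * pprime k p / real JA" "x > 0" "c = \<kappa> powr (1/2) * \<nu> * real n powr (-1/2)" "c > 0"
  shows "is_min_order n p k JA M \<kappa> \<nu> a \<longleftrightarrow> PP (ln x) a"
proof -
  have "\<And>a b. a \<ge> 1 \<Longrightarrow> b \<ge> 1 \<Longrightarrow> rho n p k JA M \<kappa> \<nu> a \<le> rho n p k JA M \<kappa> \<nu> b \<longleftrightarrow> FF (ln x) a \<le> FF (ln x) b"
    using rho_eq[OF assms(1,2)] assms(3,4) by (simp add: mult_le_cancel_right)
  then show ?thesis unfolding is_min_order_def PP_def by auto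
qed

lemma mono_least:
  assumes "L < L'" "\<exists>a. PP L a" "\<exists>a. PP L' a"
  shows "Least (PP L) \<le> Least (PP L')"
proof (rule ccontr)
  define a where "a = Least (PP L)"
  define b where "b = Least (PP L')"
  have Pa: "PP L a" using LeastI_ex[OF assms(2)] a_def by simp
  have Pb: "PP L' b" using LeastI_ex[OF assms(3)] b_def by simp
  assume "\<not> ?thesis"
  then have ba: "b < a" using a_def b_def by simp
  then have "\<not> PP L b" using a_def not_less_Least by blast
  moreover have b1: "b \<ge> 1" using Pb PP_def by simp
  ultimately obtain c where "c \<ge> 1" "FF L c < FF L b" unfolding PP_def by force
  moreover have "FF L a \<le> FF L c" using Pa \<open>c \<ge> 1\<close> PP_def by simp
  ultimately have 1: "FF L a < FF L b" by simp
  have "FF L' b \<le> FF L' a" using Pb Pa PP_def by simp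
  then have 2: "L' / b + ln (fact b) / (2 * real b) \<le> L' / a + ln (fact a) / (2 * real a)"
    by (simp add: FF_def)
  have "(L' - L) / a < (L' - L) / b"
    using ba b1 assms(1) by (intro divide_strict_left_mono) auto
  then show False using 1 2 by (simp add: FF_def diff_divide_distrib)
qed

lemma fact_lower: "m \<le> b \<Longrightarrow> real m ^ (b - m) \<le> fact b"
proof (induction b rule: dec_induct)
  case base
  then show ?case by simp
next
  case (step b)
  have "real m ^ (Suc b - m) = real m * real m ^ (b - m)"
    using step(1) by (simp add: Suc_diff_le)
  also have "\<dots> \<le> real (Suc b) * fact b"
    using step by (intro mult_mono) auto
  finally show ?case by simp
qed

lemma exists_min:
  assumes "L > 0"
  shows "\<exists>a. PP L a"
proof -
  define m where "m = nat \<lceil>exp (4 * L)\<rceil>"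
  have em: "exp (4*L) \<le> real m" unfolding m_def by linarith
  have m1: "m \<ge> 1" proof -
    have "1 \<le> exp (4*L)" using assms by simp
    then have "1 \<le> real m" using em by linarith
    then show ?thesis by simp
  qed
  have lnm: "4 * L \<le> ln (real m)" using em
    by (metis exp_gt_zero ln_exp ln_le_cancel_iff order_less_le_trans)
  define N where "N = 2 * m"
  have big: "FF L b \<ge> FF L 1" if "b > N" for b
  proof -
    have bm: "m \<le> b" using that N_def by simp
    have "ln (real m ^ (b - m)) \<le> ln (fact b)"
      using fact_lower[OF bm] m1 by (subst ln_le_cancel_iff) auto
    then have h: "real (b - m) * ln m \<le> ln (fact b)" by (simp add: ln_realpow)
    have "real b * L \<le> real (b - m) * (4*L) / 2"
    proof -
      have "real b \<le> 2 * real (b - m)" using that N_def bm by (simp add: of_nat_diff)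
      then show ?thesis using assms by (simp add: mult_right_mono)
    qed
    also have "\<dots> \<le> real (b - m) * ln m / 2" using lnm by (intro divide_right_mono mult_left_mono) auto
    also have "\<dots> \<le> ln (fact b) / 2" using h by simp
    finally have "real b * L \<le> ln (fact b) / 2" .
    moreover have "b > 0" using that by simp
    ultimately have "L \<le> ln (fact b) / (2 * real b)" by (simp add: field_simps)
    moreover have "L / real b \<ge> 0" using assms by simp
    ultimately show ?thesis by (simp add: FF_def)
  qed
  have fin: "finite (FF L ` {1..N})" "FF L ` {1..N} \<noteq> {}" using m1 N_def by auto
  define v where "v = Min (FF L ` {1..N})"
  have "v \<in> FF L ` {1..N}" using fin v_def Min_in by blast
  then obtain a where a: "a \<in> {1..N}" "FF L a = v" by auto
  have "\<forall>b\<ge>1. FF L a \<le> FF L b"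
  proof (intro allI impI)
    fix b :: nat assume "b \<ge> 1"
    show "FF L a \<le> FF L b"
    proof (cases "b \<le> N")
      case True then show ?thesis using a fin v_def \<open>b \<ge> 1\<close> by auto
    next
      case False
      have "FF L a \<le> FF L 1" using a fin v_def m1 N_def by auto
      then show ?thesis using big[of b] False by simp
    qed
  qed
  then show ?thesis using a PP_def by auto
qed

theorem proposition1:
  fixes n p k JA :: nat and M \<kappa> \<nu> :: real
  assumes "n \<ge> 1" and "k < p" and "JA \<ge> 1"
    and "M > 0" and "\<kappa> > 0" and "\<nu> > 0"
  shows "(real JA \<ge> M * pprime k p \<longrightarrow> is_min_order n p k JA M \<kappa> \<nu> 1)
       \<and> (real JA < M * pprime k p \<longrightarrow>
            (\<exists>a. is_min_order n p k JA M \<kappa> \<nu> a)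
          \<and> (\<forall>p2 k2 JA2 M2. k2 < p2 \<and> JA2 \<ge> 1 \<and> M2 > 0
               \<and> M * pprime k p / real JA < M2 * pprime k2 p2 / real JA2
               \<longrightarrow> (LEAST a. is_min_order n p k JA M \<kappa> \<nu> a)
                   \<le> (LEAST a. is_min_order n p2 k2 JA2 M2 \<kappa> \<nu> a)))"
proof -
  define c where "c = \<kappa> powr (1/2) * \<nu> * real n powr (-1/2)"
  have c0: "c > 0" using assms unfolding c_def by simp
  define x where "x = M * pprime k p / real JA"
  have x0: "x \<ge> 0" using pprime_nonneg[OF assms(2)] assms unfolding x_def by simp
  have JA0: "real JA > 0" using assms by simp
  have part1: "is_min_order n p k JA M \<kappa> \<nu> 1" if "real JA \<ge> M * pprime k p"
  proof (cases "x = 0")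
    case True
    then have "rho n p k JA M \<kappa> \<nu> a = 0" for a unfolding rho_def x_def by simp
    then show ?thesis unfolding is_min_order_def by simp
  next
    case False
    then have xp: "x > 0" using x0 by simp
    have x1: "x \<le> 1" using that JA0 unfolding x_def by simp
    have L0: "ln x \<le> 0" using xp x1 by simp
    have "PP (ln x) 1"
      unfolding PP_def
    proof (intro conjI allI impI)
      fix b :: nat assume b: "b \<ge> 1"
      have "ln x * real b \<le> ln x * 1" using L0 b by (intro mult_left_mono_neg) auto
      then have "ln x \<le> ln x / real b" using b
        by (simp add: le_divide_eq)
      moreover have g: "ln (fact b) / (2 * real b) \<ge> 0" by simp
      ultimately have "ln x \<le> ln x / real b + ln (fact b) / (2 * real b)" by linarith
      then show "FF (ln x) 1 \<le> FF (ln x) b" unfolding FF_def by simp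
    qed simp
    then show ?thesis using min_iff[OF x_def xp c_def c0] by simp
  qed
  have part2: "(\<exists>a. is_min_order n p k JA M \<kappa> \<nu> a)
          \<and> (\<forall>p2 k2 JA2 M2. k2 < p2 \<and> JA2 \<ge> 1 \<and> M2 > 0
               \<and> M * pprime k p / real JA < M2 * pprime k2 p2 / real JA2
               \<longrightarrow> (LEAST a. is_min_order n p k JA M \<kappa> \<nu> a)
                   \<le> (LEAST a. is_min_order n p2 k2 JA2 M2 \<kappa> \<nu> a))"
    if "real JA < M * pprime k p"
  proof -
    have x1: "x > 1" using that JA0 unfolding x_def by simp
    have eq1: "is_min_order n p k JA M \<kappa> \<nu> = PP (ln x)"
      using min_iff[OF x_def _ c_def c0] x1 by (intro ext) simp
    have ex1: "\<exists>a. PP (ln x) a" using exists_min x1 by simp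
    show ?thesis
    proof (intro conjI allI impI)
      show "\<exists>a. is_min_order n p k JA M \<kappa> \<nu> a" using eq1 ex1 by simp
    next
      fix p2 k2 JA2 M2
      assume h: "k2 < p2 \<and> 1 \<le> JA2 \<and> 0 < M2 \<and> M * pprime k p / real JA < M2 * pprime k2 p2 / real JA2"
      define y where "y = M2 * pprime k2 p2 / real JA2"
      have xy: "x < y" using h unfolding x_def y_def by simp
      have eq2: "is_min_order n p2 k2 JA2 M2 \<kappa> \<nu> = PP (ln y)"
        using min_iff[OF y_def _ c_def c0] xy x1 by (intro ext) simp
      have ex2: "\<exists>a. PP (ln y) a" using exists_min xy x1 by simp
      have "Least (PP (ln x)) \<le> Least (PP (ln y))"
        using mono_least[OF _ ex1 ex2] xy x1 by simp
      then show "(LEAST a. is_min_order n p k JA M \<kappa> \<nu> a) \<le> (LEAST a. is_min_order n p2 k2 JA2 M2 \<kappa> \<nu> a)"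
        using eq1 eq2 by simp
    qed
  qed
  show ?thesis using part1 part2 by blast
qed

end
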